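(* If $C\subset\mathbb P^2$ is a plane curve of degree $d$ through $O$, smooth at $O$, then $\hat\mu(C,s)=s/d$ for all $s\ge d^2$. Hence $v_1(C,s)$ is minimal for $s=d^2$ and not minimal for $s>d^2$.
   Context: Work over $\mathbb C$; $x=X/Z$, $y=Y/Z$, $O=(0,0)$; $C$ tangent to $\{y=0\}$ at $O$, locally $x\mapsto(x,\xi(x))$, $\xi(0)=\xi'(0)=0$. For $f\ne0$ with $C$-expansion $f=\sum a_{ij}x^i(y-\xi(x))^j$, $v_1(C,s;f)=\min\{i+sj:a_{ij}\ne0\}$ (real $s\ge1$). $\hat\mu(C,s)=\lim_{k\to\infty}\frac1k\max\{v_1(C,s;F/Z^k):F\ne0\text{ homogeneous of degree }k\}$; one always has $\hat\mu(C,s)\ge\sqrt s$, and $v_1(C,s)$ is called minimal if $\hat\mu(C,s)=\sqrt s$. *)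

theory Defs
  imports Complex_Main "HOL-Computational_Algebra.Polynomial_FPS"
begin

text \<open>Affine polynomials in x = X/Z, y = Y/Z are represented as elements of
  complex poly poly: the outer variable is y, the coefficients are polynomials in x.\<close>

definition tdeg :: "complex poly poly \<Rightarrow> nat" where
  "tdeg f = Max ({degree (coeff f j) + j | j. coeff f j \<noteq> 0} \<union> {0})"

text \<open>C-expansion: substitute y = w + xi(x); the result is a polynomial in w whose
  coefficients are power series in x; a_ij = coefficient of x^i w^j.\<close>
definition C_expansion :: "complex fps \<Rightarrow> complex poly poly \<Rightarrow> complex fps poly" where
  "C_expansion xi f = pcompose (map_poly fps_of_poly f) [:xi, 1:]"

definition v1 :: "complex fps \<Rightarrow> real \<Rightarrow> complex poly poly \<Rightarrow> real" where
  "v1 xi s f = Inf {real i + s * real j | i j. fps_nth (coeff (C_expansion xi f) j) i \<noteq> 0}"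

text \<open>Max of v1 over nonzero homogeneous F of degree k, i.e. over nonzero f = F/Z^k
  of total degree at most k.\<close>
definition max_v1 :: "complex fps \<Rightarrow> real \<Rightarrow> nat \<Rightarrow> real" where
  "max_v1 xi s k = Sup {v1 xi s f | f. f \<noteq> 0 \<and> tdeg f \<le> k}"

definition mu_hat :: "complex fps \<Rightarrow> real \<Rightarrow> real" where
  "mu_hat xi s = lim (\<lambda>k. max_v1 xi s k / real k)"

definition v1_minimal :: "complex fps \<Rightarrow> real \<Rightarrow> bool" where
  "v1_minimal xi s \<longleftrightarrow> mu_hat xi s = sqrt s"

end

theory Submission imports Defs "Subresultants.Subresultant_Gcd" "HOL-Computational_Algebra.Field_as_Ring" begin

interpretation fpsh: inj_idom_hom fps_of_poly
  by unfold_locales (auto simp: fps_of_poly_mult fps_of_poly_add)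

interpretation fpsmap: map_poly_inj_idom_hom fps_of_poly ..

lemma CE_mult: "C_expansion xi (a * b) = C_expansion xi a * C_expansion xi b"
  unfolding C_expansion_def by (simp add: fpsmap.hom_mult pcompose_mult)

lemma CE_power: "C_expansion xi (a ^ n) = C_expansion xi a ^ n"
proof (induction n)
  case 0 thus ?case by (simp add: C_expansion_def)
next
  case (Suc n) thus ?case by (simp add: CE_mult)
qed

lemma CE_ne0: assumes "f \<noteq> 0" shows "C_expansion xi f \<noteq> 0"
  unfolding C_expansion_def
proof
  assume "map_poly fps_of_poly f \<circ>\<^sub>p [:xi, 1:] = 0"
  hence "map_poly fps_of_poly f = 0" using pcompose_eq_0[of "map_poly fps_of_poly f" "[:xi,1:]"] by simp
  thus False using \<open>f \<noteq> 0\<close> by simp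
qed

lemma CE_coeff0: "coeff (C_expansion xi f) 0 = poly (map_poly fps_of_poly f) xi"
  unfolding C_expansion_def by (simp add: poly_0_coeff_0[symmetric] poly_pcompose)

lemma tdeg_fin: "finite {degree (coeff f j) + j | j. coeff f j \<noteq> 0}"
proof -
  have "{degree (coeff f j) + j | j. coeff f j \<noteq> 0} \<subseteq> (\<lambda>j. degree (coeff f j) + j) ` {..degree f}"
    using le_degree by fastforce
  thus ?thesis using finite_subset by blast
qed

lemma tdeg_ge: "coeff f j \<noteq> 0 \<Longrightarrow> degree (coeff f j) + j \<le> tdeg f"
  unfolding tdeg_def using tdeg_fin[of f] by (intro Max_ge) auto

lemma tdeg_le: "(\<And>j. coeff f j \<noteq> 0 \<Longrightarrow> degree (coeff f j) + j \<le> B) \<Longrightarrow> tdeg f \<le> B"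
  unfolding tdeg_def using tdeg_fin[of f] by (subst Max_le_iff) auto

lemma tdeg_attained: assumes "f \<noteq> 0"
  shows "\<exists>j. coeff f j \<noteq> 0 \<and> degree (coeff f j) + j = tdeg f"
proof -
  have "tdeg f \<in> {degree (coeff f j) + j | j. coeff f j \<noteq> 0} \<union> {0}"
    unfolding tdeg_def using tdeg_fin[of f] by (intro Max_in) auto
  moreover have "coeff f (degree f) \<noteq> 0" using assms by simp
  ultimately show ?thesis
  proof (elim UnE)
    assume "tdeg f \<in> {0}"
    moreover have "degree (coeff f (degree f)) + degree f \<le> tdeg f"
      by (rule tdeg_ge) fact
    ultimately have "degree (coeff f (degree f)) + degree f = tdeg f" by (metis le_zero_eq singletonD)
    thus ?thesis using \<open>coeff f (degree f) \<noteq> 0\<close> by blast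
  qed auto
qed

lemma degree_le_tdeg: "degree f \<le> tdeg f"
  by (cases "f = 0") (use tdeg_ge[of f "degree f"] in auto)

lemma tdeg_1[simp]: "tdeg 1 = 0"
  by (rule antisym, rule tdeg_le) (auto simp: coeff_1 split: if_splits)

lemma tdeg_mult_le: "tdeg (a * b) \<le> tdeg a + tdeg b"
proof (rule tdeg_le)
  fix n assume nz: "coeff (a * b) n \<noteq> 0"
  have cm: "coeff (a * b) n = (\<Sum>i\<le>n. coeff a i * coeff b (n - i))" by (rule coeff_mult)
  from nz obtain i where i: "i \<le> n" "coeff a i * coeff b (n - i) \<noteq> 0"
    unfolding cm by (meson sum.neutral atMost_iff)
  have "i \<le> tdeg a" using tdeg_ge[of a i] i by auto
  moreover have "n - i \<le> tdeg b" using tdeg_ge[of b "n-i"] i by auto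
  ultimately have nle: "n \<le> tdeg a + tdeg b" using i by linarith
  have "degree (coeff (a * b) n) \<le> tdeg a + tdeg b - n"
    unfolding cm
  proof (rule degree_sum_le, simp)
    fix i assume "i \<in> {..n}"
    show "degree (coeff a i * coeff b (n - i)) \<le> tdeg a + tdeg b - n"
    proof (cases "coeff a i = 0 \<or> coeff b (n - i) = 0")
      case True thus ?thesis by auto
    next
      case False
      hence "degree (coeff a i) + i \<le> tdeg a" "degree (coeff b (n-i)) + (n - i) \<le> tdeg b"
        using tdeg_ge by auto
      moreover have "degree (coeff a i * coeff b (n - i)) \<le> degree (coeff a i) + degree (coeff b (n-i))"
        by (rule degree_mult_le)
      ultimately show ?thesis using \<open>i \<in> {..n}\<close> by auto
    qed
  qed
  thus "degree (coeff (a * b) n) + n \<le> tdeg a + tdeg b" using nle by linarith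
qed

lemma tdeg_mult_ge: assumes a: "a \<noteq> 0" and b: "b \<noteq> 0"
  shows "tdeg a + tdeg b \<le> tdeg (a * b)"
proof -
  define Pa where "Pa = (\<lambda>j. coeff a j \<noteq> 0 \<and> degree (coeff a j) + j = tdeg a)"
  define Pb where "Pb = (\<lambda>j. coeff b j \<noteq> 0 \<and> degree (coeff b j) + j = tdeg b)"
  define a0 where "a0 = (LEAST j. Pa j)"
  define b0 where "b0 = (LEAST j. Pb j)"
  have exa: "\<exists>j. Pa j" using tdeg_attained[OF a] unfolding Pa_def .
  have exb: "\<exists>j. Pb j" using tdeg_attained[OF b] unfolding Pb_def .
  have Pa0: "Pa a0" unfolding a0_def using exa by (rule LeastI_ex)
  have Pb0: "Pb b0" unfolding b0_def using exb by (rule LeastI_ex)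
  have lta: "degree (coeff a j) + j < tdeg a" if "j < a0" "coeff a j \<noteq> 0" for j
  proof -
    have "\<not> Pa j" using that(1) unfolding a0_def using not_less_Least by blast
    thus ?thesis using tdeg_ge[of a j] that(2) unfolding Pa_def by auto
  qed
  have ltb: "degree (coeff b j) + j < tdeg b" if "j < b0" "coeff b j \<noteq> 0" for j
  proof -
    have "\<not> Pb j" using that(1) unfolding b0_def using not_less_Least by blast
    thus ?thesis using tdeg_ge[of b j] that(2) unfolding Pb_def by auto
  qed
  define n0 where "n0 = a0 + b0"
  define D where "D = degree (coeff a a0) + degree (coeff b b0)"
  have Dn: "D + n0 = tdeg a + tdeg b" using Pa0 Pb0 unfolding D_def n0_def Pa_def Pb_def by simp
  have cm: "coeff (a * b) n0 = (\<Sum>i\<le>n0. coeff a i * coeff b (n0 - i))" by (rule coeff_mult)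
  have "coeff (coeff (a * b) n0) D = (\<Sum>i\<le>n0. coeff (coeff a i * coeff b (n0 - i)) D)"
    unfolding cm coeff_sum ..
  also have "\<dots> = coeff (coeff a a0 * coeff b (n0 - a0)) D +
       (\<Sum>i\<in>{..n0} - {a0}. coeff (coeff a i * coeff b (n0 - i)) D)"
    by (rule sum.remove) (auto simp: n0_def)
  also have "(\<Sum>i\<in>{..n0} - {a0}. coeff (coeff a i * coeff b (n0 - i)) D) = 0"
  proof (rule sum.neutral, rule ballI)
    fix i assume i: "i \<in> {..n0} - {a0}"
    show "coeff (coeff a i * coeff b (n0 - i)) D = 0"
    proof (cases "coeff a i = 0 \<or> coeff b (n0 - i) = 0")
      case True thus ?thesis by auto
    next
      case False
      hence nz: "coeff a i \<noteq> 0" "coeff b (n0 - i) \<noteq> 0" by auto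
      have "degree (coeff a i) + degree (coeff b (n0 - i)) < D"
      proof (cases "i < a0")
        case True
        have "degree (coeff a i) + i < tdeg a" using lta[OF True nz(1)] .
        moreover have "degree (coeff b (n0 - i)) + (n0 - i) \<le> tdeg b" using tdeg_ge nz(2) by blast
        ultimately show ?thesis using Dn i unfolding n0_def by auto
      next
        case False
        hence "a0 < i" using i by auto
        hence "n0 - i < b0" using i unfolding n0_def by auto
        have "degree (coeff b (n0 - i)) + (n0 - i) < tdeg b" using ltb[OF \<open>n0 - i < b0\<close> nz(2)] .
        moreover have "degree (coeff a i) + i \<le> tdeg a" using tdeg_ge nz(1) by blast
        ultimately show ?thesis using Dn i unfolding n0_def by auto
      qed
      hence "degree (coeff a i * coeff b (n0 - i)) < D"
        using degree_mult_le[of "coeff a i" "coeff b (n0 - i)"] by linarith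
      thus ?thesis by (rule coeff_eq_0)
    qed
  qed
  also have "n0 - a0 = b0" unfolding n0_def by simp
  also have "coeff (coeff a a0 * coeff b b0) D = lead_coeff (coeff a a0) * lead_coeff (coeff b b0)"
    unfolding D_def using Pa0 Pb0 unfolding Pa_def Pb_def
    by (metis degree_mult_eq lead_coeff_mult)
  finally have "coeff (coeff (a * b) n0) D \<noteq> 0" using Pa0 Pb0 unfolding Pa_def Pb_def by simp
  hence "coeff (a * b) n0 \<noteq> 0" and "D \<le> degree (coeff (a * b) n0)"
    using le_degree by fastforce+
  with tdeg_ge[of "a * b" n0] Dn show ?thesis by linarith
qed

lemma tdeg_mult: "a \<noteq> 0 \<Longrightarrow> b \<noteq> 0 \<Longrightarrow> tdeg (a * b) = tdeg a + tdeg b"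
  using tdeg_mult_ge tdeg_mult_le by (metis antisym)

lemma tdeg_power: "a \<noteq> 0 \<Longrightarrow> tdeg (a ^ n) = n * tdeg a"
  by (induction n) (simp_all add: tdeg_mult)

lemma sum_if_split_int: "(\<Sum>i=0..<n+m. if i < n then (A::int) else B) = int n * A + int m * B"
  by (induction m) (auto simp: algebra_simps)

lemma permutes_sum_id: assumes "p permutes {0..<N}" shows "(\<Sum>i=0..<N. int (p i)) = (\<Sum>i=0..<N. int i)"
proof -
  have "(\<Sum>i=0..<N. int (p i)) = (\<Sum>i\<in>p ` {0..<N}. int i)"
    using sum.reindex[OF permutes_inj_on[OF assms], of int] by (simp add: comp_def)
  also have "p ` {0..<N} = {0..<N}" using permutes_image[OF assms] .
  finally show ?thesis .
qed

lemma resultant_degree_bound: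
  fixes h G :: "complex poly poly"
  shows "degree (resultant h G) \<le> degree G * (tdeg h - degree h) + degree h * tdeg G"
proof -
  define m where "m = degree h"
  define n where "n = degree G"
  define k where "k = tdeg h"
  define d where "d = tdeg G"
  define N where "N = m + n"
  define S where "S = sylvester_mat h G"
  define W where "W = (\<lambda>i. if i < n then int k - int m - int i else int d - int i)"
  have mk: "m \<le> k" unfolding m_def k_def by (rule degree_le_tdeg)
  have SC: "S \<in> carrier_mat N N" unfolding S_def N_def m_def n_def using sylvester_carrier_mat by auto
  have entry: "int (degree (S $$ (i, j))) \<le> W i + int j" if ij: "i < N" "j < N" "S $$ (i,j) \<noteq> 0" for i j
  proof -
    have Sij: "S $$ (i,j) = (if i < n then
       if i \<le> j \<and> j - i \<le> m then coeff h (m + i - j) else 0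
     else if i - n \<le> j \<and> j \<le> i then coeff G (i - j) else 0)"
      unfolding S_def m_def n_def using ij(1,2) unfolding N_def m_def n_def by (rule sylvester_index_mat)
    show ?thesis
    proof (cases "i < n")
      case True
      with Sij ij(3) have c: "i \<le> j" "j - i \<le> m" "S $$ (i,j) = coeff h (m + i - j)" "coeff h (m + i - j) \<noteq> 0"
        by (auto split: if_splits)
      have "degree (coeff h (m + i - j)) + (m + i - j) \<le> k" unfolding k_def by (rule tdeg_ge) fact
      thus ?thesis using c True unfolding W_def by auto
    next
      case False
      have e: "S $$ (i,j) = (if i - n \<le> j \<and> j \<le> i then coeff G (i-j) else 0)" using Sij False by simp
      have c1: "i - n \<le> j \<and> j \<le> i" using ij(3) e by (cases "i - n \<le> j \<and> j \<le> i") auto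
      hence c: "i - n \<le> j" "j \<le> i" "S $$ (i,j) = coeff G (i - j)" "coeff G (i - j) \<noteq> 0"
        using e ij(3) by auto
      have "degree (coeff G (i - j)) + (i - j) \<le> d" unfolding d_def by (rule tdeg_ge) fact
      thus ?thesis using c False unfolding W_def by auto
    qed
  qed
  define B where "B = n * (k - m) + m * d"
  have WB: "(\<Sum>i=0..<N. W i + int i) = int B"
  proof -
    have "(\<Sum>i=0..<N. W i + int i) = (\<Sum>i=0..<n+m. if i < n then int k - int m else int d)"
      unfolding N_def W_def by (intro sum.cong) (auto simp: add.commute)
    also have "\<dots> = int B" unfolding sum_if_split_int B_def using mk by (simp add: of_nat_diff)
    finally show ?thesis .
  qed
  have "resultant h G = det S" unfolding resultant_def S_def ..
  also have "\<dots> = (\<Sum> p \<in> {p. p permutes {0 ..< N}}. signof p * (\<Prod> i = 0 ..< N. S $$ (i, p i)))"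
    by (rule det_def'[OF SC])
  finally have R: "resultant h G = \<dots>" .
  have "degree (\<Sum> p \<in> {p. p permutes {0 ..< N}}. signof p * (\<Prod> i = 0 ..< N. S $$ (i, p i))) \<le> B"
  proof (rule degree_sum_le)
    show "finite {p. p permutes {0 ..< N}}" by (rule finite_permutations) simp
  next
    fix p assume p: "p \<in> {p. p permutes {0 ..< N}}"
    hence pp: "p permutes {0..<N}" by simp
    have pN: "i < N \<Longrightarrow> p i < N" for i using permutes_in_image[OF pp, of i] by simp
    show "degree (signof p * (\<Prod> i = 0 ..< N. S $$ (i, p i))) \<le> B"
    proof (cases "\<exists>i<N. S $$ (i, p i) = 0")
      case True
      then obtain i where "i < N" "S $$ (i, p i) = 0" by blast
      hence "(\<Prod> i = 0 ..< N. S $$ (i, p i)) = 0" by (intro prod_zero) auto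
      thus ?thesis by (simp only: mult_zero_right degree_0)
    next
      case False
      have "degree (\<Prod> i = 0 ..< N. S $$ (i, p i)) \<le> (\<Sum>i=0..<N. degree (S $$ (i, p i)))"
        using degree_prod_sum_le[of "{0..<N}" "\<lambda>i. S $$ (i, p i)"] by (simp add: comp_def)
      hence "int (degree (\<Prod> i = 0 ..< N. S $$ (i, p i))) \<le> int (\<Sum>i=0..<N. degree (S $$ (i, p i)))"
        by (simp only: of_nat_le_iff)
      also have "\<dots> = (\<Sum>i=0..<N. int (degree (S $$ (i, p i))))" by simp
      also have "\<dots> \<le> (\<Sum>i=0..<N. W i + int (p i))"
        using False entry pN by (intro sum_mono) auto
      also have "\<dots> = (\<Sum>i=0..<N. W i) + (\<Sum>i=0..<N. int (p i))" by (rule sum.distrib)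
      also have "\<dots> = (\<Sum>i=0..<N. W i) + (\<Sum>i=0..<N. int i)" using permutes_sum_id[OF pp] by simp
      also have "\<dots> = int B" using WB by (simp add: sum.distrib)
      finally have "degree (\<Prod> i = 0 ..< N. S $$ (i, p i)) \<le> B" by simp
      moreover have "degree (signof p * (\<Prod> i = 0 ..< N. S $$ (i, p i))) \<le> degree (\<Prod> i = 0 ..< N. S $$ (i, p i))"
        by (simp add: sign_def)
      ultimately show ?thesis by linarith
    qed
  qed
  thus ?thesis unfolding R B_def k_def m_def n_def d_def .
qed

lemma smult_one_mat_vec: assumes "(w :: 'a :: comm_ring_1 vec) \<in> carrier_vec N"
  shows "(a \<cdot>\<^sub>m 1\<^sub>m N) *\<^sub>v w = a \<cdot>\<^sub>v w"
proof (rule eq_vecI)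
  show "dim_vec ((a \<cdot>\<^sub>m 1\<^sub>m N) *\<^sub>v w) = dim_vec (a \<cdot>\<^sub>v w)" using assms by simp
  fix i assume "i < dim_vec (a \<cdot>\<^sub>v w)"
  hence i: "i < N" using assms by simp
  have "((a \<cdot>\<^sub>m 1\<^sub>m N) *\<^sub>v w) $ i = (\<Sum>j\<in>{0..<N}. (if i = j then a * w $ j else 0))"
    using i assms unfolding scalar_prod_def by (auto intro!: sum.cong)
  also have "\<dots> = a * w $ i" using i by (simp add: sum.delta)
  finally show "((a \<cdot>\<^sub>m 1\<^sub>m N) *\<^sub>v w) $ i = (a \<cdot>\<^sub>v w) $ i" using i assms by simp
qed

lemma poly_sum_lessN: fixes p :: "'a :: comm_ring_1 poly" assumes "degree p < N"
  shows "poly p x = (\<Sum>t<N. coeff p t * x ^ t)"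
proof -
  have "poly p x = (\<Sum>t\<le>degree p. coeff p t * x ^ t)" by (rule poly_altdef)
  also have "\<dots> = (\<Sum>t<N. coeff p t * x ^ t)"
    using assms by (intro sum.mono_neutral_left) (auto simp: coeff_eq_0)
  finally show ?thesis .
qed

lemma sylv_row_sum:
  fixes P0 :: "'a :: comm_ring_1 poly"
  assumes "r + degree P0 < N"
  shows "(\<Sum>j<N. coeff (monom 1 (Suc r) * P0) (N - j) * x ^ (N - 1 - j)) = x ^ r * poly P0 x"
proof -
  have "(\<Sum>j<N. coeff (monom 1 (Suc r) * P0) (N - j) * x ^ (N - 1 - j))
      = (\<Sum>j<N. coeff (monom 1 r * P0) (N - Suc j) * x ^ (N - Suc j))"
  proof (intro sum.cong refl)
    fix j assume "j \<in> {..<N}"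
    hence "N - j = Suc (N - Suc j)" by auto
    thus "coeff (monom 1 (Suc r) * P0) (N - j) * x ^ (N - 1 - j) = coeff (monom 1 r * P0) (N - Suc j) * x ^ (N - Suc j)"
      by (simp only: coeff_monom_Suc) simp
  qed
  also have "\<dots> = (\<Sum>t<N. coeff (monom 1 r * P0) t * x ^ t)"
    by (rule sum.nat_diff_reindex)
  also have "\<dots> = poly (monom 1 r * P0) x"
  proof (rule poly_sum_lessN[symmetric])
    have "degree (monom 1 r * P0) \<le> degree (monom (1::'a) r) + degree P0" by (rule degree_mult_le)
    also have "\<dots> \<le> r + degree P0" by (simp add: degree_monom_le)
    finally show "degree (monom 1 r * P0) < N" using assms by linarith
  qed
  also have "\<dots> = x ^ r * poly P0 x" by (simp add: poly_monom)
  finally show ?thesis .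
qed

lemma mult_mat_vec_cr:
  assumes m: "(A::'a::comm_ring_1 mat) \<in> carrier_mat nr nc" and v: "v \<in> carrier_vec nc"
  shows "A *\<^sub>v (k \<cdot>\<^sub>v v) = k \<cdot>\<^sub>v (A *\<^sub>v v)"
proof (rule eq_vecI)
  show "dim_vec (A *\<^sub>v (k \<cdot>\<^sub>v v)) = dim_vec (k \<cdot>\<^sub>v (A *\<^sub>v v))" using m v by simp
  fix i assume "i < dim_vec (k \<cdot>\<^sub>v (A *\<^sub>v v))"
  hence i: "i < nr" using m by simp
  show "(A *\<^sub>v (k \<cdot>\<^sub>v v)) $ i = (k \<cdot>\<^sub>v (A *\<^sub>v v)) $ i"
    using i m v by (simp add: scalar_prod_def sum_distrib_left mult.left_commute)
qed

lemma resultant_root_dvd: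
  fixes H Q :: "'a :: comm_ring_1 poly"
  assumes Q0: "poly Q x = 0" and nQ: "degree Q > 0"
  shows "poly H x dvd resultant H Q"
proof -
  define m where "m = degree H"
  define n where "n = degree Q"
  define N where "N = m + n"
  define S where "S = sylvester_mat H Q"
  define w where "w = vec N (\<lambda>j. x ^ (N - 1 - j))"
  define u where "u = vec N (\<lambda>i. if i < n then x ^ (n - 1 - i) else 0)"
  have SC: "S \<in> carrier_mat N N" unfolding S_def N_def m_def n_def using sylvester_carrier_mat by auto
  have wC: "w \<in> carrier_vec N" and uC: "u \<in> carrier_vec N" unfolding w_def u_def by auto
  have N1: "N - 1 < N" using nQ unfolding N_def n_def by simp
  have Sw: "S *\<^sub>v w = poly H x \<cdot>\<^sub>v u"
  proof (rule eq_vecI)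
    show "dim_vec (S *\<^sub>v w) = dim_vec (poly H x \<cdot>\<^sub>v u)" using SC uC by simp
    fix i assume "i < dim_vec (poly H x \<cdot>\<^sub>v u)"
    hence i: "i < N" using uC by simp
    have "(S *\<^sub>v w) $ i = (\<Sum>j\<in>{0..<N}. S $$ (i, j) * w $ j)"
      using i SC wC by (auto simp: scalar_prod_def intro!: sum.cong)
    also have "\<dots> = (\<Sum>j<N. (if i < n then coeff (monom 1 (n - i) * H) (N - j)
        else coeff (monom 1 (N - i) * Q) (N - j)) * x ^ (N - 1 - j))"
      unfolding lessThan_atLeast0
      by (intro sum.cong refl, subst S_def, subst sylvester_index_mat2)
        (use i in \<open>auto simp: w_def N_def m_def n_def\<close>)
    also have "\<dots> = poly H x * u $ i"
    proof (cases "i < n")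
      case True
      hence e: "n - i = Suc (n - 1 - i)" by auto
      have "(\<Sum>j<N. coeff (monom 1 (Suc (n - 1 - i)) * H) (N - j) * x ^ (N - 1 - j)) = x ^ (n - 1 - i) * poly H x"
        by (rule sylv_row_sum) (use True in \<open>auto simp: N_def m_def\<close>)
      thus ?thesis using True i e by (simp add: u_def mult.commute)
    next
      case False
      hence e: "N - i = Suc (N - 1 - i)" using i by auto
      have "(\<Sum>j<N. coeff (monom 1 (Suc (N - 1 - i)) * Q) (N - j) * x ^ (N - 1 - j)) = x ^ (N - 1 - i) * poly Q x"
        by (rule sylv_row_sum) (use False i in \<open>auto simp: N_def n_def\<close>)
      thus ?thesis using False i e Q0 by (simp add: u_def)
    qed
    finally show "(S *\<^sub>v w) $ i = (poly H x \<cdot>\<^sub>v u) $ i" using i uC by simp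
  qed
  have adjC: "adj_mat S \<in> carrier_mat N N" and adj: "adj_mat S * S = det S \<cdot>\<^sub>m 1\<^sub>m N"
    using adj_mat[OF SC] by auto
  have "det S \<cdot>\<^sub>v w = (adj_mat S * S) *\<^sub>v w" unfolding adj using smult_one_mat_vec[OF wC] by simp
  also have "\<dots> = adj_mat S *\<^sub>v (S *\<^sub>v w)" by (rule assoc_mult_mat_vec[OF adjC SC wC])
  also have "\<dots> = poly H x \<cdot>\<^sub>v (adj_mat S *\<^sub>v u)" unfolding Sw by (rule mult_mat_vec_cr[OF adjC uC])
  finally have "(det S \<cdot>\<^sub>v w) $ (N - 1) = (poly H x \<cdot>\<^sub>v (adj_mat S *\<^sub>v u)) $ (N - 1)" by simp
  hence "det S = poly H x * (adj_mat S *\<^sub>v u) $ (N - 1)"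
    using N1 wC adjC uC by (simp add: w_def)
  thus ?thesis unfolding resultant_def S_def[symmetric] by simp
qed

lemma bezout_local:
  fixes h G :: "complex poly poly" and xi :: "complex fps"
  assumes irred: "irreducible G" and nG: "degree G > 0"
    and branch: "poly (map_poly fps_of_poly G) xi = 0"
    and hn: "h \<noteq> 0" and nd: "\<not> G dvd h"
  shows "poly (map_poly fps_of_poly h) xi \<noteq> 0 \<and>
         subdegree (poly (map_poly fps_of_poly h) xi) \<le> tdeg h * tdeg G"
proof -
  define R where "R = resultant h G"
  have "degree (gcd h G) = 0"
  proof -
    have "gcd h G dvd G" by simp
    from irreducibleD'[OF irred this] have "is_unit (gcd h G)"
    proof
      assume "G dvd gcd h G"
      hence "G dvd h" by (rule dvd_trans) simp
      with nd show ?thesis by simp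
    qed
    then obtain c where "gcd h G = [:c:]" by (rule is_unit_polyE)
    thus ?thesis by simp
  qed
  hence R0: "R \<noteq> 0" unfolding R_def using resultant_0_gcd[of h G] \<open>degree (gcd h G) = 0\<close> unfolding R_def by simp
  have eqR: "resultant (map_poly fps_of_poly h) (map_poly fps_of_poly G) = fps_of_poly R"
    unfolding R_def by (rule fpsh.resultant_hom)
  have "poly (map_poly fps_of_poly h) xi dvd resultant (map_poly fps_of_poly h) (map_poly fps_of_poly G)"
    by (rule resultant_root_dvd[OF branch]) (simp add: nG)
  hence dv: "poly (map_poly fps_of_poly h) xi dvd fps_of_poly R" unfolding eqR .
  have FR0: "fps_of_poly R \<noteq> 0" using R0 by simp
  hence nz: "poly (map_poly fps_of_poly h) xi \<noteq> 0" using dv FR0 by (metis dvd_0_left)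
  have "subdegree (poly (map_poly fps_of_poly h) xi) \<le> subdegree (fps_of_poly R)"
    by (rule dvd_imp_subdegree_le[OF dv FR0])
  also have "\<dots> \<le> degree R" by (rule subdegree_leI) (simp add: fps_of_poly_nth R0)
  also have "\<dots> \<le> degree G * (tdeg h - degree h) + degree h * tdeg G"
    unfolding R_def by (rule resultant_degree_bound)
  also have "\<dots> \<le> tdeg G * (tdeg h - degree h) + degree h * tdeg G"
    using degree_le_tdeg[of G] by (simp add: mult_le_mono1)
  also have "\<dots> = tdeg h * tdeg G"
    proof -
    have "tdeg G * (tdeg h - degree h) + degree h * tdeg G = tdeg G * ((tdeg h - degree h) + degree h)"
      by (simp add: algebra_simps)
    also have "(tdeg h - degree h) + degree h = tdeg h" using degree_le_tdeg[of h] by simp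
    finally show ?thesis by simp
  qed
  finally show ?thesis using nz by simp
qed

lemma v1_le:
  assumes "fps_nth (coeff (C_expansion xi f) j) i \<noteq> 0" and "s \<ge> 0"
  shows "v1 xi s f \<le> real i + s * real j"
  unfolding v1_def
proof (rule cInf_lower)
  show "real i + s * real j \<in> {real i + s * real j |i j. fps_nth (coeff (C_expansion xi f) j) i \<noteq> 0}"
    using assms(1) by blast
  show "bdd_below {real i + s * real j |i j. fps_nth (coeff (C_expansion xi f) j) i \<noteq> 0}"
    using assms(2) by (intro bdd_belowI[of _ 0]) auto
qed

lemma v1_ge:
  assumes "f \<noteq> 0" and "\<And>i j. fps_nth (coeff (C_expansion xi f) j) i \<noteq> 0 \<Longrightarrow> B \<le> real i + s * real j"
  shows "B \<le> v1 xi s f"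
  unfolding v1_def
proof (rule cInf_greatest)
  have "C_expansion xi f \<noteq> 0" using CE_ne0[OF assms(1)] .
  then obtain j where "coeff (C_expansion xi f) j \<noteq> 0" by (meson leading_coeff_neq_0)
  then obtain i where "fps_nth (coeff (C_expansion xi f) j) i \<noteq> 0" using fps_nonzero_nth by blast
  thus "{real i + s * real j |i j. fps_nth (coeff (C_expansion xi f) j) i \<noteq> 0} \<noteq> {}" by blast
qed (use assms(2) in blast)

lemma decompose_G:
  fixes G f :: "'a :: idom poly"
  assumes "degree G > 0" "f \<noteq> 0"
  shows "\<exists>m h. f = G ^ m * h \<and> \<not> G dvd h"
  using assms(2)
proof (induction "degree f" arbitrary: f rule: less_induct)
  case less
  show ?case
  proof (cases "G dvd f")
    case False thus ?thesis by (intro exI[of _ 0] exI[of _ f]) auto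
  next
    case True
    then obtain f' where f': "f = G * f'" by blast
    have "f' \<noteq> 0" "G \<noteq> 0" using less.prems f' by auto
    hence "degree f = degree G + degree f'" using f' degree_mult_eq by blast
    hence "degree f' < degree f" using assms(1) by simp
    from less.hyps[OF this \<open>f' \<noteq> 0\<close>] obtain m h where "f' = G ^ m * h" "\<not> G dvd h" by blast
    thus ?thesis using f' by (intro exI[of _ "Suc m"] exI[of _ h]) (simp add: mult.assoc)
  qed
qed

interpretation fps0: comm_ring_hom "\<lambda>a::complex fps. fps_nth a 0"
  by unfold_locales (simp_all add: fps_mult_nth_0)

lemma CE_G_structure:
  fixes G :: "complex poly poly"
  assumes branch: "poly (map_poly fps_of_poly G) xi = 0" and xi0: "fps_nth xi 0 = 0"
  shows "\<exists>U. C_expansion xi G = pCons 0 U \<and> fps_nth (coeff U 0) 0 = coeff (coeff G 1) 0"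
proof -
  define P where "P = C_expansion xi G"
  obtain a U where PU: "P = pCons a U" by (rule pCons_cases)
  have "a = coeff P 0" using PU by simp
  also have "\<dots> = 0" unfolding P_def CE_coeff0 using branch .
  finally have a: "a = 0" .
  have "map_poly (\<lambda>a. fps_nth a 0) P =
        map_poly (\<lambda>a. fps_nth a 0) (map_poly fps_of_poly G) \<circ>\<^sub>p map_poly (\<lambda>a. fps_nth a 0) [:xi, 1:]"
    unfolding P_def C_expansion_def by (rule fps0.map_poly_pcompose)
  also have "map_poly (\<lambda>a. fps_nth a 0) [:xi, 1:] = [:0, 1:]" using xi0 by simp
  also have "map_poly (\<lambda>a. fps_nth a 0) (map_poly fps_of_poly G) = map_poly (\<lambda>c. coeff c 0) G"
    by (subst map_poly_map_poly) (auto simp: comp_def fps_of_poly_nth)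
  finally have "map_poly (\<lambda>a. fps_nth a 0) P = map_poly (\<lambda>c. coeff c 0) G \<circ>\<^sub>p [:0, 1:]" .
  hence "map_poly (\<lambda>a. fps_nth a 0) P = map_poly (\<lambda>c. coeff c 0) G" by (simp only: pcompose_idR)
  hence "coeff (map_poly (\<lambda>a. fps_nth a 0) P) 1 = coeff (map_poly (\<lambda>c. coeff c 0) G) 1" by simp
  hence "fps_nth (coeff P 1) 0 = coeff (coeff G 1) 0" by (simp add: coeff_map_poly)
  moreover have "coeff P 1 = coeff U 0" using PU by simp
  ultimately show ?thesis using PU a unfolding P_def by auto
qed

lemma coeff_pCons0_power_mult:
  "coeff ((pCons 0 U) ^ m * X) j = (if j < m then 0 else coeff (U ^ m * X) (j - m))"
proof -
  have "pCons 0 U = monom 1 1 * U" by (simp add: monom_Suc)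
  hence "(pCons 0 U) ^ m * X = monom 1 m * (U ^ m * X)"
    by (simp add: power_mult_distrib monom_power mult.assoc)
  thus ?thesis by (simp add: coeff_monom_mult)
qed

lemma v1_upper:
  fixes G f :: "complex poly poly" and xi :: "complex fps"
  assumes irred: "irreducible G" and nG: "degree G > 0"
    and branch: "poly (map_poly fps_of_poly G) xi = 0"
    and xi0: "fps_nth xi 0 = 0" and smooth: "coeff (coeff G 1) 0 \<noteq> 0"
    and s: "s \<ge> real (tdeg G) ^ 2" and fn: "f \<noteq> 0" and fk: "tdeg f \<le> k"
  shows "v1 xi s f \<le> real k * s / real (tdeg G)"
proof -
  define d where "d = tdeg G"
  have dpos: "d > 0" using nG degree_le_tdeg[of G] unfolding d_def by linarith
  have G0: "G \<noteq> 0" using nG by auto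
  obtain m h where fmh: "f = G ^ m * h" and nd: "\<not> G dvd h" using decompose_G[OF nG fn] by blast
  have h0: "h \<noteq> 0" using nd by auto
  have tf: "tdeg f = m * d + tdeg h" unfolding fmh d_def using G0 h0
    by (simp add: tdeg_mult tdeg_power)
  obtain U where U: "C_expansion xi G = pCons 0 U" and U0: "fps_nth (coeff U 0) 0 = coeff (coeff G 1) 0"
    using CE_G_structure[OF branch xi0] by blast
  define ph where "ph = poly (map_poly fps_of_poly h) xi"
  define c where "c = coeff U 0"
  from bezout_local[OF irred nG branch h0 nd] have ph0: "ph \<noteq> 0" and r: "subdegree ph \<le> tdeg h * d"
    unfolding ph_def d_def by auto
  have cE: "C_expansion xi f = (pCons 0 U) ^ m * C_expansion xi h"
    unfolding fmh CE_mult CE_power U ..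
  have "coeff (C_expansion xi f) m = coeff (U ^ m * C_expansion xi h) 0"
    unfolding cE coeff_pCons0_power_mult by simp
  also have "\<dots> = c ^ m * ph" unfolding ph_def c_def coeff_mult_0 CE_coeff0 coeff_0_power ..
  finally have cm: "coeff (C_expansion xi f) m = c ^ m * ph" .
  have "fps_nth (c ^ m * ph) (subdegree ph) = fps_nth (c ^ m) 0 * fps_nth ph (subdegree ph)"
    by (rule nth_subdegree_mult_right)
  also have "\<dots> \<noteq> 0" using ph0 U0 smooth unfolding c_def by (simp add: fps_nth_power_0)
  finally have "fps_nth (coeff (C_expansion xi f) m) (subdegree ph) \<noteq> 0" unfolding cm .
  hence "v1 xi s f \<le> real (subdegree ph) + s * real m"
    by (rule v1_le) (use s in \<open>simp add: order_trans[OF zero_le_power2]\<close>)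
  also have "\<dots> \<le> real (tdeg h * d) + s * real m" using r by (simp only: of_nat_le_iff add_le_cancel_right)
  also have "\<dots> \<le> real k * s / real d"
  proof -
    define K where "K = real k"
    define M where "M = real m"
    define D where "D = real d"
    have Dp: "D > 0" using dpos unfolding D_def by simp
    have "m * d + tdeg h \<le> k" using tf fk by simp
    hence "real (m * d + tdeg h) \<le> real k" by (simp only: of_nat_le_iff)
    hence RR: "M * D + real (tdeg h) \<le> K" unfolding K_def M_def D_def by simp
    have T: "real (tdeg h) \<le> K - M * D" using RR by linarith
    have MDK: "M * D \<le> K" using RR by linarith
    have sD: "s \<ge> D ^ 2" using s unfolding D_def d_def .
    have "real (tdeg h * d) + s * real m \<le> (K - M * D) * D + s * M"
      proof -
      have "real (tdeg h * d) = real (tdeg h) * D" unfolding D_def by simp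
      also have "\<dots> \<le> (K - M * D) * D" using T Dp by (intro mult_right_mono) auto
      finally show ?thesis unfolding M_def by simp
    qed
    also have "\<dots> \<le> K * s / D"
    proof -
      have X: "(K - M * D) * (s - D ^ 2) = K * s - ((K - M * D) * D + s * M) * D"
        by (simp add: algebra_simps power2_eq_square)
      have "(K - M * D) * (s - D ^ 2) \<ge> 0" using MDK sD by (intro mult_nonneg_nonneg) auto
      hence "((K - M * D) * D + s * M) * D \<le> K * s" unfolding X by linarith
      thus ?thesis using Dp by (simp add: pos_le_divide_eq)
    qed
    finally show ?thesis unfolding K_def D_def .
  qed
  finally show ?thesis unfolding d_def .
qed

lemma v1_Gpow:
  fixes G :: "complex poly poly" and xi :: "complex fps"
  assumes nG: "degree G > 0" and branch: "poly (map_poly fps_of_poly G) xi = 0"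
    and xi0: "fps_nth xi 0 = 0" and s: "s \<ge> 0"
  shows "s * real m \<le> v1 xi s (G ^ m)"
proof (rule v1_ge)
  show "G ^ m \<noteq> 0" using nG by auto
  obtain U where U: "C_expansion xi G = pCons 0 U"
    using CE_G_structure[OF branch xi0] by blast
  fix i j assume nz: "fps_nth (coeff (C_expansion xi (G ^ m)) j) i \<noteq> 0"
  have CG: "C_expansion xi (G ^ m) = (pCons 0 U) ^ m * 1" unfolding CE_power U by simp
  have "m \<le> j" proof (rule ccontr)
    assume "\<not> m \<le> j"
    hence "coeff ((pCons 0 U) ^ m * 1) j = 0" by (simp only: coeff_pCons0_power_mult) simp
    thus False using nz \<open>C_expansion xi (G ^ m) = (pCons 0 U) ^ m * 1\<close> by simp
  qed
  show "s * real m \<le> real i + s * real j" proof -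
    have "s * real m \<le> s * real j" using \<open>m \<le> j\<close> s by (intro mult_left_mono) auto
    thus ?thesis by simp
  qed
qed

theorem corollary5p13:
  fixes G :: "complex poly poly" and xi :: "complex fps" and d :: nat
  assumes irred: "irreducible G"
    and deg: "tdeg G = d"
    and through_O: "coeff (coeff G 0) 0 = 0"
    and smooth_O: "coeff (coeff G 1) 0 \<noteq> 0"
    and branch: "poly (map_poly fps_of_poly G) xi = 0"
    and xi0: "fps_nth xi 0 = 0" and xi1: "fps_nth xi 1 = 0"
  shows "(\<forall>s::real. s \<ge> real d ^ 2 \<longrightarrow>
            (\<lambda>k. max_v1 xi s k / real k) \<longlonglongrightarrow> s / real d
            \<and> mu_hat xi s = s / real d)
         \<and> v1_minimal xi (real d ^ 2)
         \<and> (\<forall>s::real. s > real d ^ 2 \<longrightarrow> \<not> v1_minimal xi s)"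
proof -
  have "coeff G 1 \<noteq> 0" using smooth_O by auto
  hence "1 \<le> degree G" by (rule le_degree)
  hence nG: "degree G > 0" by simp
  have dpos: "d > 0" using nG degree_le_tdeg[of G] deg by linarith
  have main: "(\<lambda>k. max_v1 xi s k / real k) \<longlonglongrightarrow> s / real d \<and> mu_hat xi s = s / real d"
    if s: "s \<ge> real d ^ 2" for s :: real
  proof -
    have s0: "s \<ge> 0" using s by (meson order_trans zero_le_power2)
    have ub: "v1 xi s f \<le> real k * s / real d" if "f \<noteq> 0" "tdeg f \<le> k" for f k
      using v1_upper[OF irred nG branch xi0 smooth_O _ that] s deg by simp
    have upper: "max_v1 xi s k \<le> real k * s / real d" for k
      unfolding max_v1_def
    proof (rule cSup_least)
      show "{v1 xi s f |f. f \<noteq> 0 \<and> tdeg f \<le> k} \<noteq> {}"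
      proof -
        have "v1 xi s 1 \<in> {v1 xi s f |f. f \<noteq> 0 \<and> tdeg f \<le> k}" by force
        thus ?thesis by blast
      qed
    qed (use ub in auto)
    have lower: "s * real (k div d) \<le> max_v1 xi s k" for k
    proof -
      have "s * real (k div d) \<le> v1 xi s (G ^ (k div d))"
        by (rule v1_Gpow[OF nG branch xi0 s0])
      also have "\<dots> \<le> max_v1 xi s k" unfolding max_v1_def
      proof (rule cSup_upper)
        have "G \<noteq> 0" using nG by auto
        hence "tdeg (G ^ (k div d)) = (k div d) * d" using deg by (simp add: tdeg_power)
        also have "\<dots> \<le> k" by (rule div_times_less_eq_dividend)
        finally show "v1 xi s (G ^ (k div d)) \<in> {v1 xi s f |f. f \<noteq> 0 \<and> tdeg f \<le> k}"
          using \<open>G \<noteq> 0\<close> by auto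
        show "bdd_above {v1 xi s f |f. f \<noteq> 0 \<and> tdeg f \<le> k}"
          using ub by (intro bdd_aboveI[of _ "real k * s / real d"]) auto
      qed
      finally show ?thesis .
    qed
    have lim: "(\<lambda>k. max_v1 xi s k / real k) \<longlonglongrightarrow> s / real d"
    proof (rule real_tendsto_sandwich)
      show "\<forall>\<^sub>F k in sequentially. s / real d - s / real k \<le> max_v1 xi s k / real k"
      proof (rule eventually_sequentiallyI[of 1])
        fix k :: nat assume k: "1 \<le> k"
        have kd: "real k < (real (k div d) + 1) * real d"
        proof -
          have "k = k div d * d + k mod d" by simp
          moreover have "k mod d < d" using dpos by simp
          ultimately have "k < (k div d + 1) * d" by (metis add.commute add_less_cancel_left mult_Suc Suc_eq_plus1)
          hence "real k < real ((k div d + 1) * d)" by (simp only: of_nat_less_iff)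
          thus ?thesis by (simp add: distrib_right)
        qed
        have "s / real d - s / real k = s * (real k / real d - 1) / real k"
          using k dpos by (simp add: field_simps)
        also have "\<dots> \<le> s * real (k div d) / real k"
        proof (intro divide_right_mono mult_left_mono s0)
          show "real k / real d - 1 \<le> real (k div d)" using kd dpos by (simp add: divide_simps distrib_right)
        qed simp
        also have "\<dots> \<le> max_v1 xi s k / real k" using lower[of k] by (intro divide_right_mono) auto
        finally show "s / real d - s / real k \<le> max_v1 xi s k / real k" .
      qed
      show "\<forall>\<^sub>F k in sequentially. max_v1 xi s k / real k \<le> s / real d"
      proof (rule eventually_sequentiallyI[of 1])
        fix k :: nat assume k: "1 \<le> k"
        have "max_v1 xi s k / real k \<le> (real k * s / real d) / real k"
          using upper[of k] k by (intro divide_right_mono) auto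
        also have "\<dots> = s / real d" using k by simp
        finally show "max_v1 xi s k / real k \<le> s / real d" .
      qed
      have "(\<lambda>k. s / real d - s / real k) \<longlonglongrightarrow> s / real d - 0"
        by (intro tendsto_diff tendsto_const lim_const_over_n)
      thus "(\<lambda>k. s / real d - s / real k) \<longlonglongrightarrow> s / real d" by simp
    qed simp
    moreover have "mu_hat xi s = s / real d" unfolding mu_hat_def using lim by (rule limI)
    ultimately show ?thesis by blast
  qed
  have m1: "v1_minimal xi (real d ^ 2)"
    unfolding v1_minimal_def using main[of "real d ^ 2"] dpos by (simp add: power2_eq_square)
  have m2: "\<not> v1_minimal xi s" if s: "s > real d ^ 2" for s :: real
  proof
    assume "v1_minimal xi s"
    hence eq: "s / real d = sqrt s" using main[of s] s unfolding v1_minimal_def by simp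
    have "real d = sqrt (real d ^ 2)" by simp
    also have "\<dots> < sqrt s" using s by (rule real_sqrt_less_mono)
    finally have lt: "real d < sqrt s" .
    have "s \<ge> 0" using s by (meson order_trans zero_le_power2 less_imp_le)
    hence "s = sqrt s * sqrt s" by simp
    hence "sqrt s * sqrt s / real d = sqrt s" using eq by simp
    hence "sqrt s * (sqrt s / real d) = sqrt s * 1" by simp
    moreover have "sqrt s \<noteq> 0" using lt by auto
    ultimately have "sqrt s / real d = 1" using mult_left_cancel by blast
    hence "sqrt s = real d" using dpos by simp
    thus False using lt by simp
  qed
  show ?thesis using main m1 m2 by blast
qed

end
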